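(* Let $X$ be a stratified-smooth space of dimension $n$ and let $X_s$ be a stratum of $X$. Then the closure $\overline{X_s}$, with strata $X_t$ for $t\le s$, naturally carries the structure of a stratified-smooth space of dimension $d(s)$.
   Context: A graded poset is a finite poset $\Delta$ with $d:\Delta\to\mathbb Z_{\ge0}$ such that $s<t$ implies $d(s)<d(t)$; its dimension is $\max d$. A stratified space $(X,\Delta)$ is a topological space with locally closed subsets $X_s$ ($s\in\Delta$) such that $\overline{X_s}=\bigcup_{t\le s}X_t$. A naive stratified-smooth space of dimension $n$ is a second-countable Hausdorff $X$ stratified by a graded poset of dimension $n$, with each $X_s$ a smooth manifold of dimension $d(s)$; a naive stratified-smooth map to a manifold is continuous and smooth on each stratum; an isomorphism is a poset isomorphism together with a homeomorphism carrying strata to corresponding strata by diffeomorphisms. An open $U\subset X$ is naive stratified-smooth with poset $\{s:U\cap X_s\ne\varnothing\}$. $[0,\infty)^m\times\mathbb R^n$ is stratified by the cube poset $\{0,1\}^m$ (coordinatewise order), the stratum of $s$ being $\prod_iF(s(i))\times\mathbb R^n$ with $F(0)=\{0\},F(1)=(0,\infty)$, dimension $\sum_i s(i)+n$. A cutout locus is $Z(\psi)=\psi^{-1}(0)$ where $V\subset[0,\infty)^m\times\mathbb R^n$ is open with $0\in V$ and $\psi:V\to\mathbb R^\ell$ is naive stratified-smooth with $0$ a regular value, stratified by $\Delta(\psi)=\{s:Z(\psi)\cap V_s\ne\varnothing\}$ with dimensions lowered by $\ell$. A stratified-smooth space is a naive stratified-smooth space each point of which has an open neighborhood isomorphic to a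 cutout locus. *)

theory Defs
  imports "HOL-Analysis.Analysis"
begin

text \<open>R^J = functions nat => real vanishing outside the finite index set J,
  with the (product = Euclidean) topology.  R^k is csub {..<k}.\<close>

definition csub :: "nat set \<Rightarrow> (nat \<Rightarrow> real) set" where
  "csub J = {x. \<forall>i. i \<notin> J \<longrightarrow> x i = 0}"

definition pdv :: "nat \<Rightarrow> ((nat \<Rightarrow> real) \<Rightarrow> (nat \<Rightarrow> real)) \<Rightarrow> (nat \<Rightarrow> real) \<Rightarrow> (nat \<Rightarrow> real)" where
  "pdv i f x = (\<lambda>j. deriv (\<lambda>t. f (x(i := x i + t)) j) 0)"

fun ipd :: "nat list \<Rightarrow> ((nat \<Rightarrow> real) \<Rightarrow> (nat \<Rightarrow> real)) \<Rightarrow> (nat \<Rightarrow> real) \<Rightarrow> (nat \<Rightarrow> real)" where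
  "ipd [] f = f"
| "ipd (i # is) f = pdv i (ipd is f)"

definition cinf_on :: "nat set \<Rightarrow> (nat \<Rightarrow> real) set \<Rightarrow> ((nat \<Rightarrow> real) \<Rightarrow> (nat \<Rightarrow> real)) \<Rightarrow> bool" where
  "cinf_on J U f \<longleftrightarrow> U \<subseteq> csub J \<and> openin (top_of_set (csub J)) U \<and>
     (\<forall>is. set is \<subseteq> J \<longrightarrow> continuous_on U (ipd is f) \<and>
        (\<forall>i\<in>J. \<forall>x\<in>U. \<forall>j. (\<lambda>t. ipd is f (x(i := x i + t)) j) differentiable (at 0)))"

definition graded_poset :: "'s set \<Rightarrow> ('s \<Rightarrow> 's \<Rightarrow> bool) \<Rightarrow> ('s \<Rightarrow> nat) \<Rightarrow> bool" where
  "graded_poset P le d \<longleftrightarrow> finite P \<and>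
     (\<forall>s\<in>P. le s s) \<and>
     (\<forall>s\<in>P. \<forall>t\<in>P. le s t \<and> le t s \<longrightarrow> s = t) \<and>
     (\<forall>s\<in>P. \<forall>t\<in>P. \<forall>u\<in>P. le s t \<and> le t u \<longrightarrow> le s u) \<and>
     (\<forall>s\<in>P. \<forall>t\<in>P. le s t \<and> s \<noteq> t \<longrightarrow> d s < d t)"

definition graded_dim :: "'s set \<Rightarrow> ('s \<Rightarrow> nat) \<Rightarrow> nat" where
  "graded_dim P d = Max (d ` P)"

definition locally_closed_in :: "'a topology \<Rightarrow> 'a set \<Rightarrow> bool" where
  "locally_closed_in X A \<longleftrightarrow> (\<exists>U C. openin X U \<and> closedin X C \<and> A = U \<inter> C)"

definition stratified :: "'a topology \<Rightarrow> 's set \<Rightarrow> ('s \<Rightarrow> 's \<Rightarrow> bool) \<Rightarrow> ('s \<Rightarrow> 'a set) \<Rightarrow> bool" where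
  "stratified X P le S \<longleftrightarrow>
     (\<forall>s\<in>P. S s \<noteq> {} \<and> S s \<subseteq> topspace X \<and> locally_closed_in X (S s)) \<and>
     topspace X = (\<Union>s\<in>P. S s) \<and>
     (\<forall>s\<in>P. \<forall>t\<in>P. s \<noteq> t \<longrightarrow> S s \<inter> S t = {}) \<and>
     (\<forall>s\<in>P. X closure_of (S s) = (\<Union>t\<in>{t\<in>P. le t s}. S t))"

definition smooth_atlas :: "'a topology \<Rightarrow> 'a set \<Rightarrow> nat \<Rightarrow> ('a set \<times> ('a \<Rightarrow> nat \<Rightarrow> real)) set \<Rightarrow> bool" where
  "smooth_atlas X M k Aa \<longleftrightarrow>
     (\<forall>(W, \<phi>)\<in>Aa. W \<subseteq> M \<and> openin (subtopology X M) W \<and> \<phi> ` W \<subseteq> csub {..<k} \<and>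
        openin (top_of_set (csub {..<k})) (\<phi> ` W) \<and>
        homeomorphic_map (subtopology X W) (top_of_set (\<phi> ` W)) \<phi>) \<and>
     M \<subseteq> (\<Union>(W, \<phi>)\<in>Aa. W) \<and>
     (\<forall>(W1, \<phi>1)\<in>Aa. \<forall>(W2, \<phi>2)\<in>Aa.
        cinf_on {..<k} (\<phi>1 ` (W1 \<inter> W2)) (\<phi>2 \<circ> inv_into W1 \<phi>1))"

definition naive_ss :: "'a topology \<Rightarrow> 's set \<Rightarrow> ('s \<Rightarrow> 's \<Rightarrow> bool) \<Rightarrow> ('s \<Rightarrow> nat) \<Rightarrow> ('s \<Rightarrow> 'a set)
     \<Rightarrow> ('s \<Rightarrow> ('a set \<times> ('a \<Rightarrow> nat \<Rightarrow> real)) set) \<Rightarrow> bool" where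
  "naive_ss X P le d S A \<longleftrightarrow> second_countable X \<and> Hausdorff_space X \<and>
     graded_poset P le d \<and> stratified X P le S \<and>
     (\<forall>s\<in>P. smooth_atlas X (S s) (d s) (A s))"

text \<open>[0,oo)^m x R^n is realized in csub {..<m+n}: coordinates 0..m-1 are the
  half-line coordinates.  A cube-poset element s in {0,1}^m is represented by
  the set I = {i. s(i) = 1} subset of {..<m}; the coordinatewise order is inclusion.\<close>

definition quadrant :: "nat \<Rightarrow> nat \<Rightarrow> (nat \<Rightarrow> real) set" where
  "quadrant m n = {x \<in> csub {..<m+n}. \<forall>i<m. 0 \<le> x i}"

definition cstratum :: "nat \<Rightarrow> nat \<Rightarrow> nat set \<Rightarrow> (nat \<Rightarrow> real) set" where
  "cstratum m n I = {x \<in> csub {..<m+n}. \<forall>i<m. (i \<in> I \<longrightarrow> 0 < x i) \<and> (i \<notin> I \<longrightarrow> x i = 0)}"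

text \<open>coordinates of the linear span of the stratum of I\<close>
definition cjs :: "nat \<Rightarrow> nat \<Rightarrow> nat set \<Rightarrow> nat set" where
  "cjs m n I = I \<union> {m..<m+n}"

definition zero_set :: "(nat \<Rightarrow> real) set \<Rightarrow> ((nat \<Rightarrow> real) \<Rightarrow> (nat \<Rightarrow> real)) \<Rightarrow> (nat \<Rightarrow> real) set" where
  "zero_set V \<psi> = {x \<in> V. \<psi> x = (\<lambda>_. 0)}"

text \<open>psi : V -> R^l naive stratified-smooth (continuous, smooth on every stratum),
  with 0 a regular value (the differential of psi restricted to each stratum is
  surjective at each zero).\<close>
definition cutout :: "nat \<Rightarrow> nat \<Rightarrow> nat \<Rightarrow> (nat \<Rightarrow> real) set \<Rightarrow> ((nat \<Rightarrow> real) \<Rightarrow> (nat \<Rightarrow> real)) \<Rightarrow> bool" where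
  "cutout m n l V \<psi> \<longleftrightarrow>
     openin (top_of_set (quadrant m n)) V \<and> (\<lambda>_. 0) \<in> V \<and>
     continuous_on V \<psi> \<and> \<psi> ` V \<subseteq> csub {..<l} \<and>
     (\<forall>I. I \<subseteq> {..<m} \<longrightarrow> cinf_on (cjs m n I) (V \<inter> cstratum m n I) \<psi>) \<and>
     (\<forall>I. I \<subseteq> {..<m} \<longrightarrow> (\<forall>x \<in> zero_set V \<psi> \<inter> cstratum m n I.
        \<forall>y \<in> csub {..<l}. \<exists>c. y = (\<lambda>j. \<Sum>i\<in>cjs m n I. c i * pdv i \<psi> x j)))"

definition cposet :: "nat \<Rightarrow> nat \<Rightarrow> (nat \<Rightarrow> real) set \<Rightarrow> ((nat \<Rightarrow> real) \<Rightarrow> (nat \<Rightarrow> real)) \<Rightarrow> nat set set" where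
  "cposet m n V \<psi> = {I. I \<subseteq> {..<m} \<and> zero_set V \<psi> \<inter> cstratum m n I \<noteq> {}}"

definition diffeo_onto :: "'a set \<Rightarrow> nat \<Rightarrow> ('a set \<times> ('a \<Rightarrow> nat \<Rightarrow> real)) set \<Rightarrow> ('a \<Rightarrow> nat \<Rightarrow> real)
     \<Rightarrow> nat set \<Rightarrow> (nat \<Rightarrow> real) set \<Rightarrow> bool" where
  "diffeo_onto M k Aa h J N \<longleftrightarrow> bij_betw h M N \<and>
     (\<forall>(W, \<phi>)\<in>Aa.
        cinf_on {..<k} (\<phi> ` (W \<inter> M)) (h \<circ> inv_into W \<phi>) \<and>
        (\<forall>y \<in> h ` (W \<inter> M). \<exists>Ob g. openin (top_of_set (csub J)) Ob \<and> y \<in> Ob \<and> cinf_on J Ob g \<and>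
            (\<forall>z \<in> Ob \<inter> h ` (W \<inter> M). g z = \<phi> (inv_into M h z))))"

definition ss_smooth :: "'a topology \<Rightarrow> 's set \<Rightarrow> ('s \<Rightarrow> 's \<Rightarrow> bool) \<Rightarrow> ('s \<Rightarrow> nat) \<Rightarrow> ('s \<Rightarrow> 'a set)
     \<Rightarrow> ('s \<Rightarrow> ('a set \<times> ('a \<Rightarrow> nat \<Rightarrow> real)) set) \<Rightarrow> bool" where
  "ss_smooth X P le d S A \<longleftrightarrow> naive_ss X P le d S A \<and>
     (\<forall>x\<in>topspace X. \<exists>U. openin X U \<and> x \<in> U \<and>
        (\<exists>m n l V \<psi> \<iota> h. cutout m n l V \<psi> \<and>
           bij_betw \<iota> {s\<in>P. U \<inter> S s \<noteq> {}} (cposet m n V \<psi>) \<and>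
           (\<forall>s\<in>{s\<in>P. U \<inter> S s \<noteq> {}}. \<forall>t\<in>{s\<in>P. U \<inter> S s \<noteq> {}}. le s t \<longleftrightarrow> \<iota> s \<subseteq> \<iota> t) \<and>
           (\<forall>s\<in>{s\<in>P. U \<inter> S s \<noteq> {}}. d s + l = card (\<iota> s) + n) \<and>
           homeomorphic_map (subtopology X U) (top_of_set (zero_set V \<psi>)) h \<and>
           (\<forall>s\<in>{s\<in>P. U \<inter> S s \<noteq> {}}.
              h ` (U \<inter> S s) = zero_set V \<psi> \<inter> cstratum m n (\<iota> s) \<and>
              diffeo_onto (U \<inter> S s) (d s) (A s) h (cjs m n (\<iota> s)) (zero_set V \<psi> \<inter> cstratum m n (\<iota> s)))))"

end

theory Submission
  imports Defs
begin

definition pT :: "(nat \<Rightarrow> nat) \<Rightarrow> (nat \<Rightarrow> real) \<Rightarrow> (nat \<Rightarrow> real)" where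
  "pT \<sigma> y = y \<circ> inv \<sigma>"
definition pR :: "(nat \<Rightarrow> nat) \<Rightarrow> (nat \<Rightarrow> real) \<Rightarrow> (nat \<Rightarrow> real)" where
  "pR \<sigma> x = x \<circ> \<sigma>"

lemma pT_app: "bij \<sigma> \<Longrightarrow> pT \<sigma> y (\<sigma> j) = y j"
  by (simp add: pT_def bij_is_inj)

lemma pT_pR: "bij \<sigma> \<Longrightarrow> pT \<sigma> (pR \<sigma> x) = x"
  by (auto simp: pT_def pR_def bij_is_surj surj_f_inv_f fun_eq_iff)

lemma pR_pT: "bij \<sigma> \<Longrightarrow> pR \<sigma> (pT \<sigma> y) = y"
  by (auto simp: pT_def pR_def bij_is_inj fun_eq_iff)

lemma pR_image: "bij \<sigma> \<Longrightarrow> pR \<sigma> ` E = {y. pT \<sigma> y \<in> E}"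
  by (auto simp: pT_pR pR_pT) (metis image_eqI pR_pT)

lemma pT_upd: "bij \<sigma> \<Longrightarrow> pT \<sigma> (y(i:=v)) = (pT \<sigma> y)(\<sigma> i := v)"
  by (auto simp: pT_def fun_eq_iff bij_is_inj bij_is_surj surj_f_inv_f)

lemma ipd_pT: "bij \<sigma> \<Longrightarrow> ipd is (f \<circ> pT \<sigma>) y = ipd (map \<sigma> is) f (pT \<sigma> y)"
proof (induction "is" arbitrary: y)
  case Nil then show ?case by simp
next
  case (Cons i "is")
  show ?case
    using Cons by (simp add: pdv_def pT_upd pT_app)
qed

lemma ipd_pR: "ipd is (pR \<sigma> \<circ> f) x = pR \<sigma> (ipd is f x)"
proof (induction "is" arbitrary: x)
  case Nil then show ?case by simp
next
  case (Cons i "is")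
  show ?case
    using Cons by (simp add: pdv_def pR_def fun_eq_iff)
qed

lemma cont_pT: "continuous_on S (pT \<sigma>)"
  unfolding pT_def o_def
  by (intro continuous_on_coordinatewise_then_product continuous_on_subset[OF continuous_on_product_coordinates]) auto

lemma cont_pR: "continuous_on S (pR \<sigma>)"
  unfolding pR_def o_def
  by (intro continuous_on_coordinatewise_then_product continuous_on_subset[OF continuous_on_product_coordinates]) auto

lemma all_bij:
  assumes "bij \<sigma>" shows "(\<forall>i. P i) \<longleftrightarrow> (\<forall>j. P (\<sigma> j))"
proof
  assume a: "\<forall>j. P (\<sigma> j)"
  show "\<forall>i. P i"
  proof
    fix i
    obtain j where "i = \<sigma> j" using surjD[OF bij_is_surj[OF assms]] by blast
    then show "P i" using a by simp
  qed
qed simp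

lemma csub_pT: "bij \<sigma> \<Longrightarrow> pT \<sigma> y \<in> csub (\<sigma> ` J) \<longleftrightarrow> y \<in> csub J"
  unfolding csub_def mem_Collect_eq
  apply (subst all_bij[of \<sigma>], assumption)
  apply (simp add: pT_app bij_is_inj inj_image_mem_iff)
  done

lemma cinf_sub: "cinf_on J U f \<Longrightarrow> U \<subseteq> csub J"
  unfolding cinf_on_def by blast
lemma cinf_open: "cinf_on J U f \<Longrightarrow> openin (top_of_set (csub J)) U"
  unfolding cinf_on_def by blast
lemma cinf_cont: "cinf_on J U f \<Longrightarrow> set is \<subseteq> J \<Longrightarrow> continuous_on U (ipd is f)"
  unfolding cinf_on_def by blast
lemma cinf_diff: "cinf_on J U f \<Longrightarrow> set is \<subseteq> J \<Longrightarrow> i \<in> J \<Longrightarrow> x \<in> U \<Longrightarrow>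
   (\<lambda>t. ipd is f (x(i := x i + t)) j) differentiable (at 0)"
  unfolding cinf_on_def by blast
lemma cinf_onI:
  assumes "U \<subseteq> csub J" "openin (top_of_set (csub J)) U"
    "\<And>is. set is \<subseteq> J \<Longrightarrow> continuous_on U (ipd is f)"
    "\<And>is i x j. set is \<subseteq> J \<Longrightarrow> i \<in> J \<Longrightarrow> x \<in> U \<Longrightarrow>
       (\<lambda>t. ipd is f (x(i := x i + t)) j) differentiable (at 0)"
  shows "cinf_on J U f"
  using assms unfolding cinf_on_def by blast

lemma cinf_pull:
  assumes b: "bij \<sigma>" and c: "cinf_on (\<sigma> ` J') E f"
  shows "cinf_on J' {y \<in> csub J'. pT \<sigma> y \<in> E} (f \<circ> pT \<sigma>)"
proof -
  let ?E = "{y \<in> csub J'. pT \<sigma> y \<in> E}"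
  from cinf_open[OF c] obtain Ob where Ob: "open Ob" "E = csub (\<sigma> ` J') \<inter> Ob"
    unfolding openin_open by blast
  have "?E = csub J' \<inter> (pT \<sigma> -` Ob)"
    using Ob csub_pT[OF b] by auto
  moreover have "open (pT \<sigma> -` Ob)"
    by (rule open_vimage[OF Ob(1) cont_pT])
  ultimately have op: "openin (top_of_set (csub J')) ?E"
    unfolding openin_open by blast
  have sub: "pT \<sigma> ` ?E \<subseteq> E" by auto
  show ?thesis
  proof (rule cinf_onI)
    show "?E \<subseteq> csub J'" by auto
    show "openin (top_of_set (csub J')) ?E" by (rule op)
  next
    fix "is" assume si: "set is \<subseteq> J'"
    then have si': "set (map \<sigma> is) \<subseteq> \<sigma> ` J'" by auto
    have eq: "ipd is (f \<circ> pT \<sigma>) = ipd (map \<sigma> is) f \<circ> pT \<sigma>"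
      using ipd_pT[OF b] by (auto simp: fun_eq_iff)
    have "continuous_on E (ipd (map \<sigma> is) f)"
      by (rule cinf_cont[OF c si'])
    then show "continuous_on ?E (ipd is (f \<circ> pT \<sigma>))"
      unfolding eq by (intro continuous_on_compose cont_pT continuous_on_subset[OF _ sub])
  next
    fix "is" i x j assume si: "set is \<subseteq> J'" and i: "i \<in> J'" and x: "x \<in> ?E"
    then have si': "set (map \<sigma> is) \<subseteq> \<sigma> ` J'" by auto
    have "(\<lambda>t. ipd (map \<sigma> is) f ((pT \<sigma> x)(\<sigma> i := pT \<sigma> x (\<sigma> i) + t)) j) differentiable (at 0)"
      by (rule cinf_diff[OF c si']) (use i x in auto)
    moreover have "(\<lambda>t. ipd is (f \<circ> pT \<sigma>) (x(i := x i + t)) j) =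
       (\<lambda>t. ipd (map \<sigma> is) f ((pT \<sigma> x)(\<sigma> i := pT \<sigma> x (\<sigma> i) + t)) j)"
      by (simp add: ipd_pT[OF b] pT_upd[OF b] pT_app[OF b])
    ultimately show "(\<lambda>t. ipd is (f \<circ> pT \<sigma>) (x(i := x i + t)) j) differentiable (at 0)"
      by simp
  qed
qed

lemma cinf_post:
  assumes c: "cinf_on J E f"
  shows "cinf_on J E (pR \<sigma> \<circ> f)"
proof (rule cinf_onI)
  have eq: "\<And>is. ipd is (pR \<sigma> \<circ> f) = pR \<sigma> \<circ> ipd is f"
    using ipd_pR by (auto simp: fun_eq_iff)
  show "E \<subseteq> csub J" by (rule cinf_sub[OF c])
  show "openin (top_of_set (csub J)) E" by (rule cinf_open[OF c])
  fix "is" assume "set is \<subseteq> J"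
  then have "continuous_on E (ipd is f)" by (rule cinf_cont[OF c])
  then show "continuous_on E (ipd is (pR \<sigma> \<circ> f))"
    unfolding eq by (intro continuous_on_compose cont_pR)
next
  fix "is" i x j assume "set is \<subseteq> J" "i \<in> J" "x \<in> E"
  then have "(\<lambda>t. ipd is f (x(i := x i + t)) (\<sigma> j)) differentiable (at 0)"
    by (rule cinf_diff[OF c])
  then show "(\<lambda>t. ipd is (pR \<sigma> \<circ> f) (x(i := x i + t)) j) differentiable (at 0)"
    by (simp add: ipd_pR pR_def)
qed

lemma perm_extend:
  fixes g :: "nat \<Rightarrow> nat"
  assumes fA: "finite A" and fB: "finite B" and g: "bij_betw g A B"
  shows "\<exists>\<sigma>. bij \<sigma> \<and> (\<forall>x\<in>A. \<sigma> x = g x)"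
proof -
  have iA: "infinite (- A)" by (metis Compl_eq_Diff_UNIV Diff_infinite_finite fA infinite_UNIV_nat)
  have iB: "infinite (- B)" by (metis Compl_eq_Diff_UNIV Diff_infinite_finite fB infinite_UNIV_nat)
  obtain e1 :: "nat \<Rightarrow> nat" where e1: "bij_betw e1 (- A) UNIV"
    using countableE_infinite[OF _ iA] by blast
  obtain e2 :: "nat \<Rightarrow> nat" where e2: "bij_betw e2 (- B) UNIV"
    using countableE_infinite[OF _ iB] by blast
  define f2 where "f2 = inv_into (- B) e2 \<circ> e1"
  have f2: "bij_betw f2 (- A) (- B)"
    unfolding f2_def by (rule bij_betw_trans[OF e1 bij_betw_inv_into[OF e2]])
  define \<sigma> where "\<sigma> x = (if x \<in> A then g x else f2 x)" for x
  have b1: "bij_betw \<sigma> A B"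
    using g by (rule bij_betw_cong[THEN iffD1, rotated]) (simp add: \<sigma>_def)
  have b2: "bij_betw \<sigma> (- A) (- B)"
    using f2 by (rule bij_betw_cong[THEN iffD1, rotated]) (simp add: \<sigma>_def)
  have "bij_betw \<sigma> (A \<union> - A) (B \<union> - B)"
    by (rule bij_betw_combine[OF b1 b2]) auto
  then have "bij \<sigma>" by simp
  moreover have "\<forall>x\<in>A. \<sigma> x = g x" by (simp add: \<sigma>_def)
  ultimately show ?thesis by blast
qed

lemma perm_exists:
  assumes K: "K \<subseteq> {..<m}"
  shows "\<exists>\<sigma>. bij \<sigma> \<and> (\<forall>j. j < card K \<longleftrightarrow> \<sigma> j \<in> K) \<and>
           (\<forall>j. (card K \<le> j \<and> j < card K + n) \<longleftrightarrow> (m \<le> \<sigma> j \<and> \<sigma> j < m + n))"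
proof -
  have fK: "finite K" using K finite_subset by blast
  obtain g0 where g0: "bij_betw g0 {0..<card K} K"
    using ex_bij_betw_nat_finite[OF fK] by blast
  define g where "g j = (if j < card K then g0 j else m + (j - card K))" for j
  have b1: "bij_betw g {0..<card K} K"
    using g0 by (rule bij_betw_cong[THEN iffD1, rotated]) (simp add: g_def)
  have b2': "bij_betw (\<lambda>j. m + (j - card K)) {card K..<card K + n} {m..<m+n}"
    unfolding bij_betw_def
  proof
    show "inj_on (\<lambda>j. m + (j - card K)) {card K..<card K + n}"
      by (auto simp: inj_on_def)
    show "(\<lambda>j. m + (j - card K)) ` {card K..<card K + n} = {m..<m + n}"
    proof
      show "(\<lambda>j. m + (j - card K)) ` {card K..<card K + n} \<subseteq> {m..<m + n}" by auto
      show "{m..<m + n} \<subseteq> (\<lambda>j. m + (j - card K)) ` {card K..<card K + n}"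
      proof
        fix y assume "y \<in> {m..<m+n}"
        then show "y \<in> (\<lambda>j. m + (j - card K)) ` {card K..<card K + n}"
          by (intro image_eqI[of _ _ "y - m + card K"]) auto
      qed
    qed
  qed
  have b2: "bij_betw g {card K..<card K + n} {m..<m+n}"
    using b2' by (rule bij_betw_cong[THEN iffD1, rotated]) (simp add: g_def)
  have dj: "K \<inter> {m..<m+n} = {}" using K by auto
  have "bij_betw g ({0..<card K} \<union> {card K..<card K + n}) (K \<union> {m..<m+n})"
    by (rule bij_betw_combine[OF b1 b2 dj])
  moreover have "{0..<card K} \<union> {card K..<card K + n} = {..<card K + n}" by auto
  ultimately have bg: "bij_betw g {..<card K + n} (K \<union> {m..<m+n})" by simp
  obtain \<sigma> where s: "bij \<sigma>" and se: "\<forall>x\<in>{..<card K + n}. \<sigma> x = g x"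
    using perm_extend[OF _ _ bg] fK by auto
  have "\<sigma> ` {..<card K + n} = g ` {..<card K + n}"
    by (rule image_cong) (simp_all add: se)
  then have img: "\<sigma> ` {..<card K + n} = K \<union> {m..<m+n}"
    using bij_betw_imp_surj_on[OF bg] by simp
  have mem: "\<sigma> j \<in> K \<union> {m..<m+n} \<longleftrightarrow> j < card K + n" for j
  proof -
    have "\<sigma> j \<in> \<sigma> ` {..<card K + n} \<longleftrightarrow> j \<in> {..<card K + n}"
      using s by (simp add: bij_is_inj inj_image_mem_iff)
    then show ?thesis using img by simp
  qed
  have lowK: "\<sigma> j \<in> K" if j: "j < card K" for j
  proof -
    have "g0 j \<in> K" using g0 j unfolding bij_betw_def by auto
    moreover have "\<sigma> j = g0 j" using se j by (simp add: g_def)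
    ultimately show ?thesis by simp
  qed
  have hi: "card K \<le> j \<Longrightarrow> j < card K + n \<Longrightarrow> \<sigma> j = m + (j - card K)" for j
    using se by (simp add: g_def)
  show ?thesis
  proof (intro exI[of _ \<sigma>] conjI allI)
    show "bij \<sigma>" by (rule s)
    fix j
    show "j < card K \<longleftrightarrow> \<sigma> j \<in> K"
    proof
      assume "j < card K" then show "\<sigma> j \<in> K" by (rule lowK)
    next
      assume a: "\<sigma> j \<in> K"
      then have "j < card K + n" using mem[of j] by auto
      show "j < card K"
      proof (rule ccontr)
        assume "\<not> j < card K"
        then have "\<sigma> j = m + (j - card K)" using hi[of j] \<open>j < card K + n\<close> by simp
        then have "\<sigma> j \<ge> m" by simp
        then show False using a K by auto
      qed
    qed
    show "(card K \<le> j \<and> j < card K + n) \<longleftrightarrow> (m \<le> \<sigma> j \<and> \<sigma> j < m + n)"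
    proof
      assume a: "card K \<le> j \<and> j < card K + n"
      then have e: "\<sigma> j = m + (j - card K)" using hi by blast
      have "j - card K < n" using a by presburger
      then show "m \<le> \<sigma> j \<and> \<sigma> j < m + n" unfolding e by simp
    next
      assume a: "m \<le> \<sigma> j \<and> \<sigma> j < m + n"
      then have "j < card K + n" using mem[of j] by auto
      moreover have "\<not> j < card K"
      proof
        assume "j < card K"
        then have "\<sigma> j \<in> K" by (rule lowK)
        then show False using a K by auto
      qed
      ultimately show "card K \<le> j \<and> j < card K + n" by simp
    qed
  qed
qed

lemma pT_csub_iff: "bij \<sigma> \<Longrightarrow> pT \<sigma> y \<in> csub X \<longleftrightarrow> (\<forall>j. \<sigma> j \<notin> X \<longrightarrow> y j = 0)"
  unfolding csub_def mem_Collect_eq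
  apply (subst all_bij[of \<sigma>], assumption)
  apply (simp add: pT_app)
  done

lemma pT_low_iff: "bij \<sigma> \<Longrightarrow> (\<forall>i<m. Q i (pT \<sigma> y i)) \<longleftrightarrow> (\<forall>j. \<sigma> j < m \<longrightarrow> Q (\<sigma> j) (y j))"
  apply (subst all_bij[of \<sigma>], assumption)
  apply (simp add: pT_app)
  done

lemma pT_zero: "pT \<sigma> (\<lambda>_. 0) = (\<lambda>_. 0)"
  by (simp add: pT_def o_def)

locale relab =
  fixes \<sigma> :: "nat \<Rightarrow> nat" and K :: "nat set" and m m' n :: nat
  assumes b: "bij \<sigma>" and K: "K \<subseteq> {..<m}"
    and L: "\<And>j. j < m' \<longleftrightarrow> \<sigma> j \<in> K"
    and H: "\<And>j. (m' \<le> j \<and> j < m' + n) \<longleftrightarrow> (m \<le> \<sigma> j \<and> \<sigma> j < m + n)"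
begin

lemma memB: "\<sigma> j \<in> K \<union> {m..<m+n} \<longleftrightarrow> j < m' + n"
proof -
  have "\<sigma> j \<in> K \<longleftrightarrow> j < m'" using L[of j] by simp
  moreover have "\<sigma> j \<in> {m..<m+n} \<longleftrightarrow> (m' \<le> j \<and> j < m' + n)" using H[of j] by simp
  ultimately show ?thesis by auto
qed

lemma F1: "\<sigma> j < m \<Longrightarrow> \<sigma> j \<notin> K \<Longrightarrow> \<not> j < m' + n"
  using memB[of j] by auto
lemma F2: "\<not> \<sigma> j < m + n \<Longrightarrow> \<not> j < m' + n"
  using memB[of j] K by auto
lemma F3: "j < m' \<Longrightarrow> \<sigma> j < m"
  using L[of j] K by auto
lemma F4: "\<not> j < m' + n \<Longrightarrow> \<sigma> j < m \<Longrightarrow> \<not> j < m'"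
  by simp

lemma lowq: "(\<forall>i<m. 0 \<le> pT \<sigma> y i) \<longleftrightarrow> (\<forall>j. \<sigma> j < m \<longrightarrow> 0 \<le> y j)"
  using all_bij[OF b, of "\<lambda>i. i < m \<longrightarrow> 0 \<le> pT \<sigma> y i"] by (simp add: pT_app[OF b])

lemma lows: "(\<forall>i<m. (i \<in> \<sigma> ` I \<longrightarrow> 0 < pT \<sigma> y i) \<and> (i \<notin> \<sigma> ` I \<longrightarrow> pT \<sigma> y i = 0)) \<longleftrightarrow>
   (\<forall>j. \<sigma> j < m \<longrightarrow> (j \<in> I \<longrightarrow> 0 < y j) \<and> (j \<notin> I \<longrightarrow> y j = 0))"
  using all_bij[OF b, of "\<lambda>i. i < m \<longrightarrow> (i \<in> \<sigma> ` I \<longrightarrow> 0 < pT \<sigma> y i) \<and> (i \<notin> \<sigma> ` I \<longrightarrow> pT \<sigma> y i = 0)"]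
  by (simp add: pT_app[OF b] bij_is_inj[OF b] inj_image_mem_iff)

lemma Q: "y \<in> quadrant m' n \<longleftrightarrow> pT \<sigma> y \<in> quadrant m n \<and> pT \<sigma> y \<in> csub (K \<union> {m..<m+n})"
proof -
  have e1: "pT \<sigma> y \<in> quadrant m n \<longleftrightarrow>
     (\<forall>j. \<not> \<sigma> j < m+n \<longrightarrow> y j = 0) \<and> (\<forall>j. \<sigma> j < m \<longrightarrow> 0 \<le> y j)"
    unfolding quadrant_def mem_Collect_eq pT_csub_iff[OF b] lowq by simp
  have e2: "pT \<sigma> y \<in> csub (K \<union> {m..<m+n}) \<longleftrightarrow> (\<forall>j. \<not> j < m' + n \<longrightarrow> y j = 0)"
    unfolding pT_csub_iff[OF b] memB by simp
  have e3: "y \<in> quadrant m' n \<longleftrightarrow> (\<forall>j. \<not> j < m' + n \<longrightarrow> y j = 0) \<and> (\<forall>j<m'. 0 \<le> y j)"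
    unfolding quadrant_def csub_def by auto
  show ?thesis
    unfolding e1 e2 e3
  proof (intro iffI conjI allI impI)
    fix j assume a: "(\<forall>j. \<not> j < m' + n \<longrightarrow> y j = 0) \<and> (\<forall>j<m'. 0 \<le> y j)"
    { assume "\<not> \<sigma> j < m + n" then show "y j = 0" using F2[of j] a by blast }
    { assume s: "\<sigma> j < m" show "0 \<le> y j"
      proof (cases "j < m'")
        case True then show ?thesis using a by blast
      next
        case False
        then have "\<sigma> j \<notin> K" using L[of j] by blast
        then have "\<not> j < m' + n" using F1[of j] s by blast
        then show ?thesis using a by simp
      qed }
    { assume "\<not> j < m' + n" then show "y j = 0" using a by blast }
  next
    fix j assume a: "((\<forall>j. \<not> \<sigma> j < m + n \<longrightarrow> y j = 0) \<and> (\<forall>j. \<sigma> j < m \<longrightarrow> 0 \<le> y j)) \<and>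
         (\<forall>j. \<not> j < m' + n \<longrightarrow> y j = 0)"
    { assume "\<not> j < m' + n" then show "y j = 0" using a by blast }
    { assume "j < m'" then show "0 \<le> y j" using a F3[of j] by blast }
  qed
qed

lemma CS:
  assumes I: "I \<subseteq> {..<m'}"
  shows "y \<in> cstratum m' n I \<longleftrightarrow> pT \<sigma> y \<in> cstratum m n (\<sigma> ` I)"
proof -
  have e1: "pT \<sigma> y \<in> cstratum m n (\<sigma> ` I) \<longleftrightarrow>
     (\<forall>j. \<not> \<sigma> j < m+n \<longrightarrow> y j = 0) \<and>
     (\<forall>j. \<sigma> j < m \<longrightarrow> (j \<in> I \<longrightarrow> 0 < y j) \<and> (j \<notin> I \<longrightarrow> y j = 0))"
    unfolding cstratum_def mem_Collect_eq pT_csub_iff[OF b] lows by simp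
  have e3: "y \<in> cstratum m' n I \<longleftrightarrow> (\<forall>j. \<not> j < m' + n \<longrightarrow> y j = 0) \<and>
     (\<forall>j<m'. (j \<in> I \<longrightarrow> 0 < y j) \<and> (j \<notin> I \<longrightarrow> y j = 0))"
    unfolding cstratum_def csub_def by auto
  have d1: "(\<forall>j. \<not> \<sigma> j < m+n \<longrightarrow> y j = 0) \<and>
     (\<forall>j. \<sigma> j < m \<longrightarrow> (j \<in> I \<longrightarrow> 0 < y j) \<and> (j \<notin> I \<longrightarrow> y j = 0))"
    if a1: "\<forall>j. \<not> j < m' + n \<longrightarrow> y j = 0"
    and a2: "\<forall>j<m'. (j \<in> I \<longrightarrow> 0 < y j) \<and> (j \<notin> I \<longrightarrow> y j = 0)"
  proof -
    have c1: "\<forall>j. \<not> \<sigma> j < m+n \<longrightarrow> y j = 0" using F2 a1 by blast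
    have c2: "(j \<in> I \<longrightarrow> 0 < y j) \<and> (j \<notin> I \<longrightarrow> y j = 0)" if s: "\<sigma> j < m" for j
    proof (cases "j < m'")
      case True then show ?thesis using a2 by blast
    next
      case False
      then have "j \<notin> I" using I by auto
      moreover have "\<sigma> j \<notin> K" using L[of j] False by blast
      then have "\<not> j < m' + n" using F1[of j] s by blast
      then have "y j = 0" using a1 by blast
      ultimately show ?thesis by blast
    qed
    show ?thesis using c1 c2 by blast
  qed
  have d2: "(\<forall>j. \<not> j < m' + n \<longrightarrow> y j = 0) \<and>
     (\<forall>j<m'. (j \<in> I \<longrightarrow> 0 < y j) \<and> (j \<notin> I \<longrightarrow> y j = 0))"
    if a1: "\<forall>j. \<not> \<sigma> j < m+n \<longrightarrow> y j = 0"
    and a2: "\<forall>j. \<sigma> j < m \<longrightarrow> (j \<in> I \<longrightarrow> 0 < y j) \<and> (j \<notin> I \<longrightarrow> y j = 0)"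
  proof -
    have c1: "y j = 0" if nj: "\<not> j < m' + n" for j
    proof (cases "\<sigma> j < m + n")
      case False then show ?thesis using a1 by blast
    next
      case True
      have "\<not> (m \<le> \<sigma> j \<and> \<sigma> j < m + n)" using H[of j] nj by simp
      then have s: "\<sigma> j < m" using True by simp
      have "j \<notin> I" using I nj by auto
      then show ?thesis using a2 s by blast
    qed
    have c2: "(j \<in> I \<longrightarrow> 0 < y j) \<and> (j \<notin> I \<longrightarrow> y j = 0)" if "j < m'" for j
      using a2 F3[OF that] by blast
    show ?thesis using c1 c2 by blast
  qed
  show ?thesis unfolding e1 e3 using d1 d2 by blast
qed

lemma cjs_img: "\<sigma> ` cjs m' n I = cjs m n (\<sigma> ` I)"
proof -
  have "\<sigma> ` {m'..<m'+n} = {m..<m+n}"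
  proof
    show "\<sigma> ` {m'..<m'+n} \<subseteq> {m..<m+n}"
    proof
      fix k assume "k \<in> \<sigma> ` {m'..<m'+n}"
      then obtain j where "k = \<sigma> j" "m' \<le> j \<and> j < m' + n" by auto
      then show "k \<in> {m..<m+n}" using H[of j] by simp
    qed
    show "{m..<m+n} \<subseteq> \<sigma> ` {m'..<m'+n}"
    proof
      fix k assume k: "k \<in> {m..<m+n}"
      obtain j where j: "k = \<sigma> j" using surjD[OF bij_is_surj[OF b]] by blast
      have "m' \<le> j \<and> j < m' + n" using H[of j] k j by simp
      then show "k \<in> \<sigma> ` {m'..<m'+n}" using j by simp
    qed
  qed
  then show ?thesis by (simp add: cjs_def image_Un)
qed

end

lemma cstratum_csub: "cstratum m n I \<subseteq> csub (cjs m n I)"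
  unfolding cstratum_def csub_def cjs_def by auto

lemma cstratum_quadrant: "cstratum m n I \<subseteq> quadrant m n"
  unfolding cstratum_def quadrant_def by auto

lemma diffeo_relab:
  assumes b: "bij \<sigma>" and D: "diffeo_onto M k Aa h J N"
    and J: "\<sigma> ` J' = J" and N: "N \<subseteq> csub J"
  shows "diffeo_onto M k Aa (pR \<sigma> \<circ> h) J' (pR \<sigma> ` N)"
  unfolding diffeo_onto_def
proof (intro conjI ballI)
  have bh: "bij_betw h M N" using D unfolding diffeo_onto_def by blast
  have bR: "bij_betw (pR \<sigma>) N (pR \<sigma> ` N)"
    unfolding bij_betw_def by (auto simp: inj_on_def) (metis b pT_pR)
  show bb: "bij_betw (pR \<sigma> \<circ> h) M (pR \<sigma> ` N)"
    by (rule bij_betw_trans[OF bh bR])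
  fix Wp assume Wp: "Wp \<in> Aa"
  obtain W \<phi> where Wp_eq: "Wp = (W, \<phi>)" by fastforce
  have D1: "cinf_on {..<k} (\<phi> ` (W \<inter> M)) (h \<circ> inv_into W \<phi>)"
    and D2: "\<forall>y \<in> h ` (W \<inter> M). \<exists>Ob g. openin (top_of_set (csub J)) Ob \<and> y \<in> Ob \<and> cinf_on J Ob g \<and>
            (\<forall>z \<in> Ob \<inter> h ` (W \<inter> M). g z = \<phi> (inv_into M h z))"
    using D Wp unfolding diffeo_onto_def Wp_eq by fastforce+
  have "cinf_on {..<k} (\<phi> ` (W \<inter> M)) (pR \<sigma> \<circ> (h \<circ> inv_into W \<phi>))"
    by (rule cinf_post[OF D1])
  moreover have "\<forall>y \<in> (pR \<sigma> \<circ> h) ` (W \<inter> M). \<exists>Ob g. openin (top_of_set (csub J')) Ob \<and> y \<in> Ob \<and> cinf_on J' Ob g \<and>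
            (\<forall>z \<in> Ob \<inter> (pR \<sigma> \<circ> h) ` (W \<inter> M). g z = \<phi> (inv_into M (pR \<sigma> \<circ> h) z))"
  proof
    fix y assume "y \<in> (pR \<sigma> \<circ> h) ` (W \<inter> M)"
    then obtain q where q: "q \<in> W \<inter> M" and yq: "y = pR \<sigma> (h q)" by auto
    have Ty: "pT \<sigma> y = h q" using yq b by (simp add: pT_pR)
    obtain Ob g where Ob: "openin (top_of_set (csub J)) Ob" "h q \<in> Ob" "cinf_on J Ob g"
       "\<forall>z \<in> Ob \<inter> h ` (W \<inter> M). g z = \<phi> (inv_into M h z)"
      using D2 q by blast
    let ?Ob = "{z \<in> csub J'. pT \<sigma> z \<in> Ob}"
    have ci: "cinf_on J' ?Ob (g \<circ> pT \<sigma>)"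
      using cinf_pull[OF b, of J' Ob g] Ob(3) J by simp
    have "h q \<in> N" using bh q unfolding bij_betw_def by auto
    then have "h q \<in> csub (\<sigma> ` J')" using N J by auto
    then have "y \<in> csub J'" using csub_pT[OF b, of y J'] Ty by simp
    then have yin: "y \<in> ?Ob" using Ty Ob(2) by simp
    have ih: "inj_on h M" using bh unfolding bij_betw_def by blast
    have ihR: "inj_on (pR \<sigma> \<circ> h) M" using bb unfolding bij_betw_def by blast
    have eqs: "(g \<circ> pT \<sigma>) z = \<phi> (inv_into M (pR \<sigma> \<circ> h) z)"
      if z: "z \<in> ?Ob \<inter> (pR \<sigma> \<circ> h) ` (W \<inter> M)" for z
    proof -
      obtain q' where q': "q' \<in> W \<inter> M" and zq: "z = pR \<sigma> (h q')" using z by auto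
      have Tz: "pT \<sigma> z = h q'" using zq b by (simp add: pT_pR)
      have "pT \<sigma> z \<in> Ob \<inter> h ` (W \<inter> M)" using z Tz q' by auto
      then have "g (pT \<sigma> z) = \<phi> (inv_into M h (pT \<sigma> z))" using Ob(4) by blast
      also have "inv_into M h (pT \<sigma> z) = q'" using Tz ih q' by (simp add: inv_into_f_f)
      also have "q' = inv_into M (pR \<sigma> \<circ> h) z"
        using zq ihR q' inv_into_f_f[OF ihR, of q'] by simp
      finally show ?thesis by simp
    qed
    show "\<exists>Ob g. openin (top_of_set (csub J')) Ob \<and> y \<in> Ob \<and> cinf_on J' Ob g \<and>
            (\<forall>z \<in> Ob \<inter> (pR \<sigma> \<circ> h) ` (W \<inter> M). g z = \<phi> (inv_into M (pR \<sigma> \<circ> h) z))"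
      using cinf_open[OF ci] yin ci eqs by blast
  qed
  ultimately show "case Wp of (W, \<phi>) \<Rightarrow>
        cinf_on {..<k} (\<phi> ` (W \<inter> M)) ((pR \<sigma> \<circ> h) \<circ> inv_into W \<phi>) \<and>
        (\<forall>y \<in> (pR \<sigma> \<circ> h) ` (W \<inter> M). \<exists>Ob g. openin (top_of_set (csub J')) Ob \<and> y \<in> Ob \<and> cinf_on J' Ob g \<and>
            (\<forall>z \<in> Ob \<inter> (pR \<sigma> \<circ> h) ` (W \<inter> M). g z = \<phi> (inv_into M (pR \<sigma> \<circ> h) z)))"
    unfolding Wp_eq by (simp add: o_assoc)
qed

lemma homeo_pR:
  assumes b: "bij \<sigma>"
  shows "homeomorphic_map (top_of_set E) (top_of_set (pR \<sigma> ` E)) (pR \<sigma>)"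
  unfolding homeomorphic_map_maps
proof (intro exI[of _ "pT \<sigma>"])
  show "homeomorphic_maps (top_of_set E) (top_of_set (pR \<sigma> ` E)) (pR \<sigma>) (pT \<sigma>)"
    unfolding homeomorphic_maps_def
    using b by (auto simp: cont_pR cont_pT pT_pR pR_pT)
qed

lemma strat_facts:
  assumes st: "stratified X P le S"
  shows "\<And>t. t \<in> P \<Longrightarrow> S t \<noteq> {} \<and> S t \<subseteq> topspace X \<and> locally_closed_in X (S t)"
    and "topspace X = (\<Union>t\<in>P. S t)"
    and "\<And>t u. t \<in> P \<Longrightarrow> u \<in> P \<Longrightarrow> t \<noteq> u \<Longrightarrow> S t \<inter> S u = {}"
    and "\<And>t. t \<in> P \<Longrightarrow> X closure_of (S t) = (\<Union>u\<in>{u\<in>P. le u t}. S u)"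
proof -
  note c = st[unfolded stratified_def]
  show "\<And>t. t \<in> P \<Longrightarrow> S t \<noteq> {} \<and> S t \<subseteq> topspace X \<and> locally_closed_in X (S t)"
    using c[THEN conjunct1] by (rule bspec)
  show "topspace X = (\<Union>t\<in>P. S t)" using c[THEN conjunct2, THEN conjunct1] .
  show "\<And>t u. t \<in> P \<Longrightarrow> u \<in> P \<Longrightarrow> t \<noteq> u \<Longrightarrow> S t \<inter> S u = {}"
    using c[THEN conjunct2, THEN conjunct2, THEN conjunct1] by blast
  show "\<And>t. t \<in> P \<Longrightarrow> X closure_of (S t) = (\<Union>u\<in>{u\<in>P. le u t}. S u)"
    using c[THEN conjunct2, THEN conjunct2, THEN conjunct2] by (rule bspec)
qed

lemma gp_facts:
  assumes gp: "graded_poset P le d"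
  shows "finite P" "\<And>t. t \<in> P \<Longrightarrow> le t t"
    "\<And>t u. t \<in> P \<Longrightarrow> u \<in> P \<Longrightarrow> le t u \<Longrightarrow> le u t \<Longrightarrow> t = u"
    "\<And>t u v. t \<in> P \<Longrightarrow> u \<in> P \<Longrightarrow> v \<in> P \<Longrightarrow> le t u \<Longrightarrow> le u v \<Longrightarrow> le t v"
    "\<And>t u. t \<in> P \<Longrightarrow> u \<in> P \<Longrightarrow> le t u \<Longrightarrow> t \<noteq> u \<Longrightarrow> d t < d u"
  using gp unfolding graded_poset_def by blast+

lemma gp_sub:
  assumes gp: "graded_poset P le d"
  shows "graded_poset {t\<in>P. le t s} le d"
proof -
  note g = gp_facts[OF gp]
  show ?thesis unfolding graded_poset_def
  proof (intro conjI ballI impI)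
    show "finite {t \<in> P. le t s}" using g(1) by simp
  next
    fix t assume "t \<in> {t \<in> P. le t s}" then show "le t t" using g(2) by simp
  next
    fix t u assume "t \<in> {t \<in> P. le t s}" "u \<in> {t \<in> P. le t s}" "le t u \<and> le u t"
    then show "t = u" using g(3)[of t u] by simp
  next
    fix t u v assume "t \<in> {t \<in> P. le t s}" "u \<in> {t \<in> P. le t s}" "v \<in> {t \<in> P. le t s}" "le t u \<and> le u v"
    then show "le t v" using g(4)[of t u v] by simp
  next
    fix t u assume "t \<in> {t \<in> P. le t s}" "u \<in> {t \<in> P. le t s}" "le t u \<and> t \<noteq> u"
    then show "d t < d u" using g(5)[of t u] by simp
  qed
qed

lemma atlas_sub:
  assumes MC: "M \<subseteq> C" and at: "smooth_atlas X M k Aa"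
  shows "smooth_atlas (subtopology X C) M k Aa"
proof -
  have e: "\<And>W. W \<subseteq> C \<Longrightarrow> subtopology (subtopology X C) W = subtopology X W"
    by (simp add: subtopology_subtopology Int_absorb1)
  have a1: "\<forall>(W, \<phi>)\<in>Aa. W \<subseteq> M \<and> openin (subtopology X M) W \<and> \<phi> ` W \<subseteq> csub {..<k} \<and>
        openin (top_of_set (csub {..<k})) (\<phi> ` W) \<and>
        homeomorphic_map (subtopology X W) (top_of_set (\<phi> ` W)) \<phi>"
    and a2: "M \<subseteq> (\<Union>(W, \<phi>)\<in>Aa. W)"
    and a3: "\<forall>(W1, \<phi>1)\<in>Aa. \<forall>(W2, \<phi>2)\<in>Aa. cinf_on {..<k} (\<phi>1 ` (W1 \<inter> W2)) (\<phi>2 \<circ> inv_into W1 \<phi>1)"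
    using at unfolding smooth_atlas_def by blast+
  have b1: "\<forall>(W, \<phi>)\<in>Aa. W \<subseteq> M \<and> openin (subtopology (subtopology X C) M) W \<and> \<phi> ` W \<subseteq> csub {..<k} \<and>
        openin (top_of_set (csub {..<k})) (\<phi> ` W) \<and>
        homeomorphic_map (subtopology (subtopology X C) W) (top_of_set (\<phi> ` W)) \<phi>"
  proof
    fix p assume p: "p \<in> Aa"
    obtain W \<phi> where pe: "p = (W, \<phi>)" by fastforce
    have f: "W \<subseteq> M \<and> openin (subtopology X M) W \<and> \<phi> ` W \<subseteq> csub {..<k} \<and>
        openin (top_of_set (csub {..<k})) (\<phi> ` W) \<and>
        homeomorphic_map (subtopology X W) (top_of_set (\<phi> ` W)) \<phi>"
      using a1 p pe by fastforce
    then have "W \<subseteq> C" using MC by blast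
    then show "case p of (W, \<phi>) \<Rightarrow> W \<subseteq> M \<and> openin (subtopology (subtopology X C) M) W \<and> \<phi> ` W \<subseteq> csub {..<k} \<and>
        openin (top_of_set (csub {..<k})) (\<phi> ` W) \<and>
        homeomorphic_map (subtopology (subtopology X C) W) (top_of_set (\<phi> ` W)) \<phi>"
      unfolding pe using f e[of W] e[of M] MC by simp
  qed
  show ?thesis unfolding smooth_atlas_def using b1 a2 a3 by blast
qed

lemma strat_sub:
  assumes st: "stratified X P le S" and gp: "graded_poset P le d" and s: "s \<in> P"
  shows "stratified (subtopology X (X closure_of S s)) {t\<in>P. le t s} le S"
proof -
  note sf = strat_facts[OF st]
  note g = gp_facts[OF gp]
  define C where "C = X closure_of S s"
  have Ceq: "C = (\<Union>t\<in>{t\<in>P. le t s}. S t)" unfolding C_def using sf(4)[OF s] .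
  have StC: "S t \<subseteq> C" if "t \<in> P" "le t s" for t using that Ceq by blast
  have Ctop: "C \<subseteq> topspace X" unfolding C_def by (rule closure_of_subset_topspace)
  have "stratified (subtopology X C) {t\<in>P. le t s} le S"
    unfolding stratified_def
  proof (intro conjI ballI)
    fix t assume t: "t \<in> {t\<in>P. le t s}"
    then have tP: "t \<in> P" and ts: "le t s" by auto
    show "S t \<noteq> {}" using sf(1)[OF tP] by blast
    show "S t \<subseteq> topspace (subtopology X C)" using sf(1)[OF tP] StC[OF tP ts] by auto
    obtain U Cl where U: "openin X U" "closedin X Cl" "S t = U \<inter> Cl"
      using sf(1)[OF tP] unfolding locally_closed_in_def by blast
    have "openin (subtopology X C) (U \<inter> C)" by (rule openin_subtopology_Int[OF U(1)])
    moreover have "closedin (subtopology X C) (Cl \<inter> C)"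
      unfolding closedin_subtopology using U(2) by blast
    moreover have "S t = (U \<inter> C) \<inter> (Cl \<inter> C)" using U(3) StC[OF tP ts] by blast
    ultimately show "locally_closed_in (subtopology X C) (S t)"
      unfolding locally_closed_in_def by blast
  next
    show "topspace (subtopology X C) = (\<Union>t\<in>{t\<in>P. le t s}. S t)"
      using Ctop Ceq by auto
  next
    fix t assume t: "t \<in> {t\<in>P. le t s}"
    then have tP: "t \<in> P" and ts: "le t s" by auto
    fix u assume u: "u \<in> {t\<in>P. le t s}"
    show "t \<noteq> u \<longrightarrow> S t \<inter> S u = {}" using sf(3)[OF tP] u by blast
  next
    fix t assume t: "t \<in> {t\<in>P. le t s}"
    then have tP: "t \<in> P" and ts: "le t s" by auto
    have "subtopology X C closure_of S t = C \<inter> X closure_of (C \<inter> S t)"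
      by (rule closure_of_subtopology)
    also have "C \<inter> S t = S t" using StC[OF tP ts] by blast
    also have "X closure_of S t = (\<Union>u\<in>{u\<in>P. le u t}. S u)" by (rule sf(4)[OF tP])
    also have "C \<inter> (\<Union>u\<in>{u\<in>P. le u t}. S u) = (\<Union>u\<in>{u \<in> {t\<in>P. le t s}. le u t}. S u)"
    proof
      show "C \<inter> (\<Union>u\<in>{u\<in>P. le u t}. S u) \<subseteq> (\<Union>u\<in>{u \<in> {t\<in>P. le t s}. le u t}. S u)"
      proof
        fix y assume "y \<in> C \<inter> (\<Union>u\<in>{u\<in>P. le u t}. S u)"
        then obtain u where "u \<in> P" "le u t" "y \<in> S u" by blast
        moreover have "le u s" using g(4)[OF \<open>u \<in> P\<close> tP s] \<open>le u t\<close> ts by blast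
        ultimately show "y \<in> (\<Union>u\<in>{u \<in> {t\<in>P. le t s}. le u t}. S u)" by blast
      qed
      show "(\<Union>u\<in>{u \<in> {t\<in>P. le t s}. le u t}. S u) \<subseteq> C \<inter> (\<Union>u\<in>{u\<in>P. le u t}. S u)"
        using StC by blast
    qed
    finally show "subtopology X C closure_of S t = (\<Union>u\<in>{u \<in> {t\<in>P. le t s}. le u t}. S u)" .
  qed
  then show ?thesis unfolding C_def .
qed

lemma gdim_sub:
  assumes gp: "graded_poset P le d" and s: "s \<in> P"
  shows "graded_dim {t\<in>P. le t s} d = d s"
proof -
  note g = gp_facts[OF gp]
  show ?thesis unfolding graded_dim_def
  proof (rule Max_eqI)
    show "finite (d ` {t \<in> P. le t s})" using g(1) by simp
    show "d s \<in> d ` {t \<in> P. le t s}" using g(2)[OF s] s by blast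
    fix y assume "y \<in> d ` {t \<in> P. le t s}"
    then obtain t where "t \<in> P" "le t s" "y = d t" by blast
    then show "y \<le> d s" using g(5)[of t s] s by (cases "t = s") auto
  qed
qed

lemma naive_sub:
  assumes nss: "naive_ss X P le d S A" and s: "s \<in> P"
  shows "naive_ss (subtopology X (X closure_of S s)) {t\<in>P. le t s} le d S A"
proof -
  have sc: "second_countable X" and hs: "Hausdorff_space X" and gp: "graded_poset P le d"
    and st: "stratified X P le S" and at: "\<forall>s\<in>P. smooth_atlas X (S s) (d s) (A s)"
    using nss unfolding naive_ss_def by blast+
  have Ceq: "X closure_of S s = (\<Union>t\<in>{t\<in>P. le t s}. S t)" using strat_facts(4)[OF st s] .
  have "smooth_atlas (subtopology X (X closure_of S s)) (S t) (d t) (A t)" if "t \<in> {t\<in>P. le t s}" for t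
    using atlas_sub[of "S t" "X closure_of S s" X "d t" "A t"] that at Ceq by blast
  then show ?thesis
    unfolding naive_ss_def
    using second_countable_subtopology[OF sc] Hausdorff_space_subtopology[OF hs]
      gp_sub[OF gp] strat_sub[OF st gp s] by blast
qed

lemma local_sub:
  assumes nss: "naive_ss X P le d S A" and s: "s \<in> P" and xC: "x \<in> X closure_of S s"
    and HH: "\<exists>U. openin X U \<and> x \<in> U \<and>
        (\<exists>m n l V \<psi> \<iota> h. cutout m n l V \<psi> \<and>
           bij_betw \<iota> {s\<in>P. U \<inter> S s \<noteq> {}} (cposet m n V \<psi>) \<and>
           (\<forall>s\<in>{s\<in>P. U \<inter> S s \<noteq> {}}. \<forall>t\<in>{s\<in>P. U \<inter> S s \<noteq> {}}. le s t \<longleftrightarrow> \<iota> s \<subseteq> \<iota> t) \<and>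
           (\<forall>s\<in>{s\<in>P. U \<inter> S s \<noteq> {}}. d s + l = card (\<iota> s) + n) \<and>
           homeomorphic_map (subtopology X U) (top_of_set (zero_set V \<psi>)) h \<and>
           (\<forall>s\<in>{s\<in>P. U \<inter> S s \<noteq> {}}.
              h ` (U \<inter> S s) = zero_set V \<psi> \<inter> cstratum m n (\<iota> s) \<and>
              diffeo_onto (U \<inter> S s) (d s) (A s) h (cjs m n (\<iota> s)) (zero_set V \<psi> \<inter> cstratum m n (\<iota> s))))"
  shows "\<exists>U. openin (subtopology X (X closure_of S s)) U \<and> x \<in> U \<and>
        (\<exists>m n l V \<psi> \<iota> h. cutout m n l V \<psi> \<and>
           bij_betw \<iota> {t\<in>{t\<in>P. le t s}. U \<inter> S t \<noteq> {}} (cposet m n V \<psi>) \<and>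
           (\<forall>t\<in>{t\<in>{t\<in>P. le t s}. U \<inter> S t \<noteq> {}}. \<forall>u\<in>{t\<in>{t\<in>P. le t s}. U \<inter> S t \<noteq> {}}. le t u \<longleftrightarrow> \<iota> t \<subseteq> \<iota> u) \<and>
           (\<forall>t\<in>{t\<in>{t\<in>P. le t s}. U \<inter> S t \<noteq> {}}. d t + l = card (\<iota> t) + n) \<and>
           homeomorphic_map (subtopology (subtopology X (X closure_of S s)) U) (top_of_set (zero_set V \<psi>)) h \<and>
           (\<forall>t\<in>{t\<in>{t\<in>P. le t s}. U \<inter> S t \<noteq> {}}.
              h ` (U \<inter> S t) = zero_set V \<psi> \<inter> cstratum m n (\<iota> t) \<and>
              diffeo_onto (U \<inter> S t) (d t) (A t) h (cjs m n (\<iota> t)) (zero_set V \<psi> \<inter> cstratum m n (\<iota> t))))"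
proof -
  have gp: "graded_poset P le d" and st: "stratified X P le S"
    using nss unfolding naive_ss_def by blast+
  note sf = strat_facts[OF st]
  note g = gp_facts[OF gp]
  define C where "C = X closure_of S s"
  have Ceq: "C = (\<Union>t\<in>{t\<in>P. le t s}. S t)" unfolding C_def using sf(4)[OF s] .
  have StC: "S t \<subseteq> C" if "t \<in> P" "le t s" for t using that Ceq by blast
  have Ctop: "C \<subseteq> topspace X" unfolding C_def by (rule closure_of_subset_topspace)
  obtain U where Uo: "openin X U" and xU: "x \<in> U" and
    HH2: "\<exists>m n l V \<psi> \<iota> h. cutout m n l V \<psi> \<and>
           bij_betw \<iota> {s\<in>P. U \<inter> S s \<noteq> {}} (cposet m n V \<psi>) \<and>
           (\<forall>s\<in>{s\<in>P. U \<inter> S s \<noteq> {}}. \<forall>t\<in>{s\<in>P. U \<inter> S s \<noteq> {}}. le s t \<longleftrightarrow> \<iota> s \<subseteq> \<iota> t) \<and>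
           (\<forall>s\<in>{s\<in>P. U \<inter> S s \<noteq> {}}. d s + l = card (\<iota> s) + n) \<and>
           homeomorphic_map (subtopology X U) (top_of_set (zero_set V \<psi>)) h \<and>
           (\<forall>s\<in>{s\<in>P. U \<inter> S s \<noteq> {}}.
              h ` (U \<inter> S s) = zero_set V \<psi> \<inter> cstratum m n (\<iota> s) \<and>
              diffeo_onto (U \<inter> S s) (d s) (A s) h (cjs m n (\<iota> s)) (zero_set V \<psi> \<inter> cstratum m n (\<iota> s)))"
    using HH apply - apply (erule exE) apply (elim conjE) apply (rule that) apply assumption+ done
  define PU where "PU = {t\<in>P. U \<inter> S t \<noteq> {}}"
  obtain m n l V \<psi> \<iota> h where cut: "cutout m n l V \<psi>"
    and bi: "bij_betw \<iota> PU (cposet m n V \<psi>)"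
    and ord0: "\<forall>t\<in>PU. \<forall>u\<in>PU. le t u \<longleftrightarrow> \<iota> t \<subseteq> \<iota> u"
    and dim0: "\<forall>t\<in>PU. d t + l = card (\<iota> t) + n"
    and hom: "homeomorphic_map (subtopology X U) (top_of_set (zero_set V \<psi>)) h"
    and hd0: "\<forall>t\<in>PU. h ` (U \<inter> S t) = zero_set V \<psi> \<inter> cstratum m n (\<iota> t) \<and>
              diffeo_onto (U \<inter> S t) (d t) (A t) h (cjs m n (\<iota> t)) (zero_set V \<psi> \<inter> cstratum m n (\<iota> t))"
    using HH2 unfolding PU_def[symmetric] apply - apply (elim exE conjE) apply (rule that) apply assumption+ done
  have ord: "le t u \<longleftrightarrow> \<iota> t \<subseteq> \<iota> u" if "t \<in> PU" "u \<in> PU" for t u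
    using ord0 that by simp
  have dim: "d t + l = card (\<iota> t) + n" if "t \<in> PU" for t
    using dim0 that by simp
  have hst: "h ` (U \<inter> S t) = zero_set V \<psi> \<inter> cstratum m n (\<iota> t)" if "t \<in> PU" for t
    using bspec[OF hd0 that] by (rule conjunct1)
  have dif: "diffeo_onto (U \<inter> S t) (d t) (A t) h (cjs m n (\<iota> t)) (zero_set V \<psi> \<inter> cstratum m n (\<iota> t))" if "t \<in> PU" for t
    using bspec[OF hd0 that] by (rule conjunct2)
  define Z where "Z = zero_set V \<psi>"
  have sPU: "s \<in> PU"
  proof -
    have "\<exists>y. y \<in> S s \<and> y \<in> U" using xC Uo xU unfolding in_closure_of by blast
    then show ?thesis using s unfolding PU_def by blast
  qed
  have cpos: "\<iota> t \<subseteq> {..<m} \<and> Z \<inter> cstratum m n (\<iota> t) \<noteq> {}" if "t \<in> PU" for t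
  proof -
    have "\<iota> t \<in> cposet m n V \<psi>" using bij_betw_imp_surj_on[OF bi] that by blast
    then show ?thesis unfolding cposet_def Z_def by blast
  qed
  define K where "K = \<iota> s"
  have Km: "K \<subseteq> {..<m}" using cpos[OF sPU] unfolding K_def by blast
  obtain \<sigma> where b: "bij \<sigma>" and L: "\<forall>j. j < card K \<longleftrightarrow> \<sigma> j \<in> K"
     and H: "\<forall>j. (card K \<le> j \<and> j < card K + n) \<longleftrightarrow> (m \<le> \<sigma> j \<and> \<sigma> j < m + n)"
    using perm_exists[OF Km, of n] by blast
  define m' where "m' = card K"
  interpret R: relab \<sigma> K m m' n
    by (rule relab.intro) (use b Km L H in \<open>simp_all add: m'_def\<close>)
  define B where "B = K \<union> {m..<m+n}"
  define V' where "V' = {y \<in> quadrant m' n. pT \<sigma> y \<in> V}"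
  define \<psi>' where "\<psi>' = \<psi> \<circ> pT \<sigma>"
  define \<iota>' where "\<iota>' t = \<sigma> -` \<iota> t" for t
  define h' where "h' = pR \<sigma> \<circ> h"
  define U' where "U' = U \<inter> C"
  have cut1: "openin (top_of_set (quadrant m n)) V"
    and cut2: "(\<lambda>_. 0) \<in> V"
    and cut3: "continuous_on V \<psi>"
    and cut4: "\<psi> ` V \<subseteq> csub {..<l}"
    and cut5: "\<And>I. I \<subseteq> {..<m} \<Longrightarrow> cinf_on (cjs m n I) (V \<inter> cstratum m n I) \<psi>"
    and cut6: "\<And>I x y. I \<subseteq> {..<m} \<Longrightarrow> x \<in> zero_set V \<psi> \<inter> cstratum m n I \<Longrightarrow> y \<in> csub {..<l} \<Longrightarrow>
        \<exists>c. y = (\<lambda>j. \<Sum>i\<in>cjs m n I. c i * pdv i \<psi> x j)"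
  proof -
    note c = cut[unfolded cutout_def]
    show "openin (top_of_set (quadrant m n)) V" using c[THEN conjunct1] .
    show "(\<lambda>_. 0) \<in> V" using c[THEN conjunct2, THEN conjunct1] .
    show "continuous_on V \<psi>" using c[THEN conjunct2, THEN conjunct2, THEN conjunct1] .
    show "\<psi> ` V \<subseteq> csub {..<l}" using c[THEN conjunct2, THEN conjunct2, THEN conjunct2, THEN conjunct1] .
    show "\<And>I. I \<subseteq> {..<m} \<Longrightarrow> cinf_on (cjs m n I) (V \<inter> cstratum m n I) \<psi>"
      using c[THEN conjunct2, THEN conjunct2, THEN conjunct2, THEN conjunct2, THEN conjunct1] by blast
    show "\<And>I x y. I \<subseteq> {..<m} \<Longrightarrow> x \<in> zero_set V \<psi> \<inter> cstratum m n I \<Longrightarrow> y \<in> csub {..<l} \<Longrightarrow>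
        \<exists>c. y = (\<lambda>j. \<Sum>i\<in>cjs m n I. c i * pdv i \<psi> x j)"
      using c[THEN conjunct2, THEN conjunct2, THEN conjunct2, THEN conjunct2, THEN conjunct2] by blast
  qed
  have Vq: "V \<subseteq> quadrant m n" using cut1 by (rule openin_imp_subset)
  have Z'iff: "y \<in> zero_set V' \<psi>' \<longleftrightarrow> pT \<sigma> y \<in> Z \<and> pT \<sigma> y \<in> csub B" for y
    unfolding zero_set_def V'_def \<psi>'_def Z_def B_def using R.Q[of y] Vq by auto
  have Z'eq: "zero_set V' \<psi>' = pR \<sigma> ` (Z \<inter> csub B)"
    using Z'iff pR_image[OF b] by auto
  have Zc: "y \<in> zero_set V' \<psi>' \<inter> cstratum m' n I \<longleftrightarrow> pT \<sigma> y \<in> Z \<inter> cstratum m n (\<sigma> ` I)"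
    if I: "I \<subseteq> {..<m'}" for I y
  proof
    assume "y \<in> zero_set V' \<psi>' \<inter> cstratum m' n I"
    then show "pT \<sigma> y \<in> Z \<inter> cstratum m n (\<sigma> ` I)" using Z'iff R.CS[OF I] by blast
  next
    assume a: "pT \<sigma> y \<in> Z \<inter> cstratum m n (\<sigma> ` I)"
    then have "y \<in> cstratum m' n I" using R.CS[OF I] by blast
    then have "y \<in> quadrant m' n" using cstratum_quadrant by blast
    then have "pT \<sigma> y \<in> csub B" using R.Q unfolding B_def by blast
    then show "y \<in> zero_set V' \<psi>' \<inter> cstratum m' n I" using a Z'iff \<open>y \<in> cstratum m' n I\<close> by blast
  qed
  have sigK: "\<sigma> ` I \<subseteq> K" if "I \<subseteq> {..<m'}" for I
    using that L unfolding m'_def by auto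
  have sigm: "\<sigma> ` I \<subseteq> {..<m}" if "I \<subseteq> {..<m'}" for I
    using sigK[OF that] Km by blast
  have hU: "h ` U = Z"
  proof -
    have "h ` topspace (subtopology X U) = topspace (top_of_set Z)"
      using homeomorphic_imp_surjective_map[OF hom] unfolding Z_def .
    moreover have "topspace (subtopology X U) = U" using openin_subset[OF Uo] by auto
    ultimately show ?thesis by simp
  qed
  have ordK: "le t s \<longleftrightarrow> \<iota> t \<subseteq> K" if "t \<in> PU" for t
    using ord[OF that sPU] unfolding K_def .
  have csub_mono: "csub J1 \<subseteq> csub J2" if "J1 \<subseteq> J2" for J1 J2
    using that unfolding csub_def by auto
  have HB: "h ` (U \<inter> C) = Z \<inter> csub B"
  proof
    show "h ` (U \<inter> C) \<subseteq> Z \<inter> csub B"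
    proof
      fix z assume "z \<in> h ` (U \<inter> C)"
      then obtain p where p: "p \<in> U" "p \<in> C" "z = h p" by blast
      then obtain t where t: "t \<in> P" "le t s" "p \<in> S t" using Ceq by blast
      then have tPU: "t \<in> PU" unfolding PU_def using p by blast
      have "z \<in> Z \<inter> cstratum m n (\<iota> t)" using hst[OF tPU] p t unfolding Z_def by blast
      moreover have "cjs m n (\<iota> t) \<subseteq> B" using ordK[OF tPU] t unfolding cjs_def B_def by blast
      ultimately show "z \<in> Z \<inter> csub B" using cstratum_csub csub_mono by blast
    qed
    show "Z \<inter> csub B \<subseteq> h ` (U \<inter> C)"
    proof
      fix z assume z: "z \<in> Z \<inter> csub B"
      then obtain p where p: "p \<in> U" "z = h p" using hU by blast
      then have "p \<in> topspace X" using openin_subset[OF Uo] by blast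
      then obtain t where t: "t \<in> P" "p \<in> S t" using sf(2) by blast
      then have tPU: "t \<in> PU" unfolding PU_def using p by blast
      have zt: "z \<in> cstratum m n (\<iota> t)" using hst[OF tPU] p t unfolding Z_def by blast
      have "\<iota> t \<subseteq> K"
      proof
        fix i assume i: "i \<in> \<iota> t"
        then have im: "i < m" using cpos[OF tPU] by blast
        then have "0 < z i" using zt i unfolding cstratum_def by blast
        then have "i \<in> B" using z unfolding csub_def by auto
        then show "i \<in> K" using im unfolding B_def by auto
      qed
      then have "le t s" using ordK[OF tPU] by blast
      then have "p \<in> C" using StC t by blast
      then show "z \<in> h ` (U \<inter> C)" using p by blast
    qed
  qed
  define P'U where "P'U = {t\<in>{t\<in>P. le t s}. U' \<inter> S t \<noteq> {}}"
  have P'U_eq: "P'U = {t\<in>PU. le t s}"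
    unfolding P'U_def PU_def U'_def using StC by blast
  have tK: "\<iota> t \<subseteq> K" if "t \<in> P'U" for t using that ordK unfolding P'U_eq by blast
  have sig_iota: "\<sigma> ` \<iota>' t = \<iota> t" for t
    unfolding \<iota>'_def using bij_is_surj[OF b] by simp
  have iota'_m: "\<iota>' t \<subseteq> {..<m'}" if "t \<in> P'U" for t
    using tK[OF that] L unfolding \<iota>'_def m'_def by auto
  have zst: "pR \<sigma> ` (Z \<inter> cstratum m n (\<iota> t)) = zero_set V' \<psi>' \<inter> cstratum m' n (\<iota>' t)" if "t \<in> P'U" for t
  proof -
    have "pR \<sigma> ` (Z \<inter> cstratum m n (\<iota> t)) = {y. pT \<sigma> y \<in> Z \<inter> cstratum m n (\<sigma> ` \<iota>' t)}"
      unfolding pR_image[OF b] sig_iota ..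
    also have "\<dots> = zero_set V' \<psi>' \<inter> cstratum m' n (\<iota>' t)"
      using Zc[OF iota'_m[OF that]] by blast
    finally show ?thesis .
  qed
  have G3: "cutout m' n l V' \<psi>'"
    unfolding cutout_def
  proof (intro conjI allI impI ballI)
    obtain Ob where Ob: "open Ob" "V = quadrant m n \<inter> Ob" using cut1 unfolding openin_open by blast
    have "V' = quadrant m' n \<inter> (pT \<sigma> -` Ob)"
      unfolding V'_def Ob(2) using R.Q by blast
    moreover have "open (pT \<sigma> -` Ob)" by (rule open_vimage[OF Ob(1) cont_pT])
    ultimately show "openin (top_of_set (quadrant m' n)) V'" unfolding openin_open by blast
    have "(\<lambda>_. 0::real) \<in> quadrant m' n" unfolding quadrant_def csub_def by simp
    then show "(\<lambda>_. 0) \<in> V'" unfolding V'_def using cut2 by (simp add: pT_zero)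
    have sub: "pT \<sigma> ` V' \<subseteq> V" unfolding V'_def by auto
    show "continuous_on V' \<psi>'" unfolding \<psi>'_def
      by (rule continuous_on_compose[OF cont_pT continuous_on_subset[OF cut3 sub]])
    show "\<psi>' ` V' \<subseteq> csub {..<l}" unfolding \<psi>'_def using sub cut4 by auto
  next
    fix I assume I: "I \<subseteq> {..<m'}"
    have c0: "cinf_on (\<sigma> ` cjs m' n I) (V \<inter> cstratum m n (\<sigma> ` I)) \<psi>"
      using cut5[OF sigm[OF I]] unfolding R.cjs_img .
    have eq: "V' \<inter> cstratum m' n I = {y \<in> csub (cjs m' n I). pT \<sigma> y \<in> V \<inter> cstratum m n (\<sigma> ` I)}"
    proof
      show "V' \<inter> cstratum m' n I \<subseteq> {y \<in> csub (cjs m' n I). pT \<sigma> y \<in> V \<inter> cstratum m n (\<sigma> ` I)}"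
        unfolding V'_def using R.CS[OF I] cstratum_csub by blast
      show "{y \<in> csub (cjs m' n I). pT \<sigma> y \<in> V \<inter> cstratum m n (\<sigma> ` I)} \<subseteq> V' \<inter> cstratum m' n I"
        unfolding V'_def using R.CS[OF I] cstratum_quadrant by blast
    qed
    show "cinf_on (cjs m' n I) (V' \<inter> cstratum m' n I) \<psi>'"
      unfolding eq \<psi>'_def by (rule cinf_pull[OF b c0])
  next
    fix I x y assume I: "I \<subseteq> {..<m'}" and x: "x \<in> zero_set V' \<psi>' \<inter> cstratum m' n I"
      and y: "y \<in> csub {..<l}"
    have Tx: "pT \<sigma> x \<in> zero_set V \<psi> \<inter> cstratum m n (\<sigma> ` I)" using Zc[OF I] x unfolding Z_def by blast
    obtain c where c: "y = (\<lambda>j. \<Sum>k\<in>cjs m n (\<sigma> ` I). c k * pdv k \<psi> (pT \<sigma> x) j)"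
      using cut6[OF sigm[OF I] Tx y] by blast
    have pd: "pdv i \<psi>' x = pdv (\<sigma> i) \<psi> (pT \<sigma> x)" for i
      using ipd_pT[OF b, of "[i]" \<psi> x] unfolding \<psi>'_def by simp
    have inj: "inj_on \<sigma> (cjs m' n I)" using bij_is_inj[OF b] by (rule inj_on_subset) simp
    have "y = (\<lambda>j. \<Sum>i\<in>cjs m' n I. (c \<circ> \<sigma>) i * pdv i \<psi>' x j)"
      unfolding c R.cjs_img[symmetric] pd sum.reindex[OF inj] by (simp add: o_def)
    then show "\<exists>c. y = (\<lambda>j. \<Sum>i\<in>cjs m' n I. c i * pdv i \<psi>' x j)" by blast
  qed
  have G4: "bij_betw \<iota>' P'U (cposet m' n V' \<psi>')"
    unfolding bij_betw_def
  proof
    have injI: "inj_on \<iota> PU" using bij_betw_imp_inj_on[OF bi] .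
    show "inj_on \<iota>' P'U"
    proof (rule inj_onI)
      fix t u assume t: "t \<in> P'U" and u: "u \<in> P'U" and e: "\<iota>' t = \<iota>' u"
      then have "\<iota> t = \<iota> u" using sig_iota by metis
      then show "t = u" using injI t u unfolding P'U_eq by (auto dest: inj_onD)
    qed
    show "\<iota>' ` P'U = cposet m' n V' \<psi>'"
    proof
      show "\<iota>' ` P'U \<subseteq> cposet m' n V' \<psi>'"
      proof
        fix I assume "I \<in> \<iota>' ` P'U"
        then obtain t where t: "t \<in> P'U" "I = \<iota>' t" by blast
        then have tPU: "t \<in> PU" unfolding P'U_eq by blast
        obtain z where z: "z \<in> Z \<inter> cstratum m n (\<iota> t)" using cpos[OF tPU] by blast
        have "pT \<sigma> (pR \<sigma> z) \<in> Z \<inter> cstratum m n (\<sigma> ` \<iota>' t)"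
          using z by (simp add: pT_pR[OF b] sig_iota)
        then have "pR \<sigma> z \<in> zero_set V' \<psi>' \<inter> cstratum m' n (\<iota>' t)"
          using Zc[OF iota'_m[OF t(1)]] by blast
        then show "I \<in> cposet m' n V' \<psi>'"
          unfolding cposet_def using t iota'_m[OF t(1)] by blast
      qed
      show "cposet m' n V' \<psi>' \<subseteq> \<iota>' ` P'U"
      proof
        fix I assume "I \<in> cposet m' n V' \<psi>'"
        then have I: "I \<subseteq> {..<m'}" and ne: "zero_set V' \<psi>' \<inter> cstratum m' n I \<noteq> {}"
          unfolding cposet_def by blast+
        then obtain y where "y \<in> zero_set V' \<psi>' \<inter> cstratum m' n I" by blast
        then have "pT \<sigma> y \<in> Z \<inter> cstratum m n (\<sigma> ` I)" using Zc[OF I] by blast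
        then have "\<sigma> ` I \<in> cposet m n V \<psi>" unfolding cposet_def Z_def using sigm[OF I] by blast
        then have "\<sigma> ` I \<in> \<iota> ` PU" using bij_betw_imp_surj_on[OF bi] by simp
        then obtain t where t: "t \<in> PU" "\<iota> t = \<sigma> ` I" by (metis imageE)
        then have "le t s" using ordK[OF t(1)] sigK[OF I] by simp
        then have tP: "t \<in> P'U" using t unfolding P'U_eq by blast
        have "\<iota>' t = I" unfolding \<iota>'_def t(2) using inj_vimage_image_eq[OF bij_is_inj[OF b]] by simp
        then show "I \<in> \<iota>' ` P'U" using tP by blast
      qed
    qed
  qed
  have G5: "le t u \<longleftrightarrow> \<iota>' t \<subseteq> \<iota>' u" if t: "t \<in> P'U" and u: "u \<in> P'U" for t u
  proof -
    have "le t u \<longleftrightarrow> \<iota> t \<subseteq> \<iota> u" using ord t u unfolding P'U_eq by blast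
    also have "\<dots> \<longleftrightarrow> \<iota>' t \<subseteq> \<iota>' u"
    proof
      assume "\<iota> t \<subseteq> \<iota> u" then show "\<iota>' t \<subseteq> \<iota>' u" unfolding \<iota>'_def by blast
    next
      assume "\<iota>' t \<subseteq> \<iota>' u" then have "\<sigma> ` \<iota>' t \<subseteq> \<sigma> ` \<iota>' u" by (rule image_mono)
      then show "\<iota> t \<subseteq> \<iota> u" unfolding sig_iota .
    qed
    finally show ?thesis .
  qed
  have G6: "d t + l = card (\<iota>' t) + n" if t: "t \<in> P'U" for t
  proof -
    have "card (\<iota>' t) = card (\<iota> t)" unfolding \<iota>'_def
      by (rule card_vimage_inj[OF bij_is_inj[OF b]]) (simp add: bij_is_surj[OF b])
    then show ?thesis using dim t unfolding P'U_eq by simp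
  qed
  have G7: "homeomorphic_map (subtopology (subtopology X C) U') (top_of_set (zero_set V' \<psi>')) h'"
  proof -
    have e1: "subtopology (subtopology X C) U' = subtopology X (U \<inter> C)"
      unfolding U'_def subtopology_subtopology by (simp add: Int_commute Int_left_commute)
    have tsp: "topspace (subtopology X U) \<inter> (U \<inter> C) = U \<inter> C" using Ctop by auto
    have "h ` (topspace (subtopology X U) \<inter> (U \<inter> C)) = topspace (top_of_set Z) \<inter> h ` (U \<inter> C)"
      unfolding tsp using hU by auto
    then have hm1: "homeomorphic_map (subtopology (subtopology X U) (U \<inter> C)) (subtopology (top_of_set Z) (h ` (U \<inter> C))) h"
      using homeomorphic_map_subtopologies[OF hom[folded Z_def]] by blast
    have e2: "subtopology (subtopology X U) (U \<inter> C) = subtopology X (U \<inter> C)"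
      unfolding subtopology_subtopology by (simp add: Int_absorb)
    have e3: "subtopology (top_of_set Z) (h ` (U \<inter> C)) = top_of_set (Z \<inter> csub B)"
      unfolding subtopology_subtopology HB by (simp add: Int_absorb Int_assoc[symmetric])
    have hm2: "homeomorphic_map (top_of_set (Z \<inter> csub B)) (top_of_set (pR \<sigma> ` (Z \<inter> csub B))) (pR \<sigma>)"
      by (rule homeo_pR[OF b])
    have "homeomorphic_map (subtopology X (U \<inter> C)) (top_of_set (pR \<sigma> ` (Z \<inter> csub B))) (pR \<sigma> \<circ> h)"
      by (rule homeomorphic_map_compose[OF hm1[unfolded e2 e3] hm2])
    then show ?thesis unfolding e1 h'_def Z'eq .
  qed
  have G8: "h' ` (U' \<inter> S t) = zero_set V' \<psi>' \<inter> cstratum m' n (\<iota>' t) \<and>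
     diffeo_onto (U' \<inter> S t) (d t) (A t) h' (cjs m' n (\<iota>' t)) (zero_set V' \<psi>' \<inter> cstratum m' n (\<iota>' t))"
    if t: "t \<in> P'U" for t
  proof -
    have tPU: "t \<in> PU" and ts: "le t s" "t \<in> P" using t unfolding P'U_eq PU_def by blast+
    have e: "U' \<inter> S t = U \<inter> S t" unfolding U'_def using StC[OF ts(2) ts(1)] by blast
    have i1: "h' ` (U' \<inter> S t) = pR \<sigma> ` (Z \<inter> cstratum m n (\<iota> t))"
      unfolding e h'_def image_comp[symmetric] hst[OF tPU] Z_def ..
    have D: "diffeo_onto (U \<inter> S t) (d t) (A t) h (cjs m n (\<iota> t)) (Z \<inter> cstratum m n (\<iota> t))"
      using dif[OF tPU] unfolding Z_def .
    have J: "\<sigma> ` cjs m' n (\<iota>' t) = cjs m n (\<iota> t)" unfolding R.cjs_img sig_iota ..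
    have N: "Z \<inter> cstratum m n (\<iota> t) \<subseteq> csub (cjs m n (\<iota> t))" using cstratum_csub by blast
    have "diffeo_onto (U \<inter> S t) (d t) (A t) (pR \<sigma> \<circ> h) (cjs m' n (\<iota>' t)) (pR \<sigma> ` (Z \<inter> cstratum m n (\<iota> t)))"
      by (rule diffeo_relab[OF b D J N])
    then show ?thesis using i1 zst[OF t] e unfolding h'_def by simp
  qed
  have G1: "openin (subtopology X C) U'" unfolding U'_def by (rule openin_subtopology_Int[OF Uo])
  have G2: "x \<in> U'" unfolding U'_def C_def using xU xC by blast
  show ?thesis
    unfolding C_def[symmetric]
    apply (rule exI[of _ U'])
    apply (rule conjI[OF G1])
    apply (rule conjI[OF G2])
    apply (rule exI[of _ m'], rule exI[of _ n], rule exI[of _ l], rule exI[of _ V'], rule exI[of _ \<psi>'],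
           rule exI[of _ \<iota>'], rule exI[of _ h'])
    using G3 G4 G5 G6 G7 G8 unfolding P'U_def by blast
qed

theorem lemmaA13:
  fixes X :: "'a topology" and P :: "'s set" and le :: "'s \<Rightarrow> 's \<Rightarrow> bool"
    and d :: "'s \<Rightarrow> nat" and S :: "'s \<Rightarrow> 'a set"
    and A :: "'s \<Rightarrow> ('a set \<times> ('a \<Rightarrow> nat \<Rightarrow> real)) set"
    and n :: nat and s :: 's
  assumes "ss_smooth X P le d S A" and "graded_dim P d = n" and "s \<in> P"
  shows "ss_smooth (subtopology X (X closure_of S s)) {t\<in>P. le t s} le d S A \<and>
         graded_dim {t\<in>P. le t s} d = d s"
proof
  have nss: "naive_ss X P le d S A" using assms(1) unfolding ss_smooth_def by blast
  have gp: "graded_poset P le d" using nss unfolding naive_ss_def by blast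
  note loc = assms(1)[unfolded ss_smooth_def, THEN conjunct2]
  show "ss_smooth (subtopology X (X closure_of S s)) {t\<in>P. le t s} le d S A"
    unfolding ss_smooth_def
  proof (intro conjI ballI)
    show "naive_ss (subtopology X (X closure_of S s)) {t\<in>P. le t s} le d S A"
      by (rule naive_sub[OF nss assms(3)])
    fix x assume x: "x \<in> topspace (subtopology X (X closure_of S s))"
    then have xt: "x \<in> topspace X" and xC: "x \<in> X closure_of S s" by auto
    show "\<exists>U. openin (subtopology X (X closure_of S s)) U \<and> x \<in> U \<and>
        (\<exists>m n l V \<psi> \<iota> h. cutout m n l V \<psi> \<and>
           bij_betw \<iota> {t\<in>{t\<in>P. le t s}. U \<inter> S t \<noteq> {}} (cposet m n V \<psi>) \<and>
           (\<forall>t\<in>{t\<in>{t\<in>P. le t s}. U \<inter> S t \<noteq> {}}. \<forall>u\<in>{t\<in>{t\<in>P. le t s}. U \<inter> S t \<noteq> {}}. le t u \<longleftrightarrow> \<iota> t \<subseteq> \<iota> u) \<and>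
           (\<forall>t\<in>{t\<in>{t\<in>P. le t s}. U \<inter> S t \<noteq> {}}. d t + l = card (\<iota> t) + n) \<and>
           homeomorphic_map (subtopology (subtopology X (X closure_of S s)) U) (top_of_set (zero_set V \<psi>)) h \<and>
           (\<forall>t\<in>{t\<in>{t\<in>P. le t s}. U \<inter> S t \<noteq> {}}.
              h ` (U \<inter> S t) = zero_set V \<psi> \<inter> cstratum m n (\<iota> t) \<and>
              diffeo_onto (U \<inter> S t) (d t) (A t) h (cjs m n (\<iota> t)) (zero_set V \<psi> \<inter> cstratum m n (\<iota> t))))"
      by (rule local_sub[OF nss assms(3) xC loc[rule_format, OF xt]])
  qed
  show "graded_dim {t\<in>P. le t s} d = d s" by (rule gdim_sub[OF gp assms(3)])
qed

end
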